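(* Let $A_1,A_2:\mathbb{R}^n\rightrightarrows\mathbb{R}^n$ be monotone linear relations. Then $q_{A_1}+q_{A_2}=q_{A_1+A_2}$. If in addition $\operatorname{dom}A_1\subseteq\operatorname{dom}A_2$ and $A_1-A_2$ is monotone, then $q_{A_1}-q_{A_2}=q_{A_1-A_2}$.
   Context: A linear relation is an operator whose graph is a linear subspace; monotone means $\langle x^*-y^*,x-y\rangle\ge0$ on the graph. For a monotone linear relation $B$, $q_B(x)=\frac12\langle x,Bx\rangle$ if $x\in\operatorname{dom}B$ (single-valued) and $\infty$ otherwise. $A_1\pm A_2$ are pointwise Minkowski sums/differences with $\operatorname{dom}(A_1\pm A_2)=\operatorname{dom}A_1\cap\operatorname{dom}A_2$. Convention: $\infty-t=\infty$ for real $t$. *)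

theory Defs
  imports "HOL-Analysis.Analysis"
begin

definition graph :: "('a \<Rightarrow> 'b set) \<Rightarrow> ('a \<times> 'b) set" where
  "graph A = {(x, y). y \<in> A x}"

definition rdom :: "('a \<Rightarrow> 'b set) \<Rightarrow> 'a set" where
  "rdom A = {x. A x \<noteq> {}}"

definition linear_relation :: "('a::real_vector \<Rightarrow> 'b::real_vector set) \<Rightarrow> bool" where
  "linear_relation A \<longleftrightarrow> subspace (graph A)"

definition monotone_rel :: "('a::real_inner \<Rightarrow> 'a set) \<Rightarrow> bool" where
  "monotone_rel A \<longleftrightarrow>
     (\<forall>(x, x') \<in> graph A. \<forall>(y, y') \<in> graph A. inner (x' - y') (x - y) \<ge> 0)"

text \<open>Pointwise Minkowski sum / difference; the domain is automatically the intersection.\<close>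
definition rel_plus :: "('a \<Rightarrow> 'b::ab_group_add set) \<Rightarrow> ('a \<Rightarrow> 'b set) \<Rightarrow> 'a \<Rightarrow> 'b set" where
  "rel_plus A1 A2 x = {a + b | a b. a \<in> A1 x \<and> b \<in> A2 x}"

definition rel_minus :: "('a \<Rightarrow> 'b::ab_group_add set) \<Rightarrow> ('a \<Rightarrow> 'b set) \<Rightarrow> 'a \<Rightarrow> 'b set" where
  "rel_minus A1 A2 x = {a - b | a b. a \<in> A1 x \<and> b \<in> A2 x}"

text \<open>q_B(x) = 1/2 <x, Bx> on dom B (well defined for monotone linear relations), \<infinity> otherwise.\<close>
definition qB :: "('a::real_inner \<Rightarrow> 'a set) \<Rightarrow> 'a \<Rightarrow> ereal" where
  "qB B x = (if x \<in> rdom B then ereal (inner x (SOME y. y \<in> B x) / 2) else \<infinity>)"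

definition ediff :: "ereal \<Rightarrow> ereal \<Rightarrow> ereal" where
  "ediff a b = (if a = \<infinity> then \<infinity> else a - b)"

end

theory Submission
  imports Defs
begin

lemma wd:
  fixes A :: "'a::real_inner \<Rightarrow> 'a set"
  assumes lin: "linear_relation A" and mon: "monotone_rel A"
    and y: "y \<in> A x" and y': "y' \<in> A x"
  shows "inner x y = inner x y'"
proof -
  have S: "subspace (graph A)" using lin by (simp add: linear_relation_def)
  have g1: "(x, y) \<in> graph A" using y by (simp add: graph_def)
  have g2: "(x, y') \<in> graph A" using y' by (simp add: graph_def)
  define d where "d = y - y'"
  have g0: "(0, d) \<in> graph A" using subspace_diff[OF S g1 g2] by (simp add: d_def)
  have gs: "(0, s *\<^sub>R d) \<in> graph A" for s
    using subspace_scale[OF S g0, of s] by simp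
  have ineq: "inner (y - s *\<^sub>R d) x \<ge> 0" for s
    using mon g1 gs[of s] unfolding monotone_rel_def by fastforce
  have "inner d x = 0"
  proof (rule ccontr)
    assume c: "inner d x \<noteq> 0"
    have "inner (y - ((inner y x + 1) / inner d x) *\<^sub>R d) x \<ge> 0" by (rule ineq)
    also have "inner (y - ((inner y x + 1) / inner d x) *\<^sub>R d) x = -1"
      using c by (simp add: inner_diff_left field_simps)
    finally show False by simp
  qed
  then show ?thesis by (simp add: d_def inner_diff_left inner_diff_right inner_commute)
qed

lemma qB_not_minf: "qB B x \<noteq> -\<infinity>"
  by (simp add: qB_def)

lemma some_in:
  assumes "x \<in> rdom A" shows "(SOME y. y \<in> A x) \<in> A x"
  using assms by (simp add: rdom_def some_in_eq)

theorem proposition4p22: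
  fixes A1 A2 :: "real^'n \<Rightarrow> (real^'n) set"
  assumes "linear_relation A1" and "monotone_rel A1"
    and "linear_relation A2" and "monotone_rel A2"
  shows "(\<forall>x. qB A1 x + qB A2 x = qB (rel_plus A1 A2) x)
    \<and> (rdom A1 \<subseteq> rdom A2 \<and> monotone_rel (rel_minus A1 A2) \<longrightarrow>
         (\<forall>x. ediff (qB A1 x) (qB A2 x) = qB (rel_minus A1 A2) x))"
proof (intro conjI allI impI)
  fix x
  have dp: "x \<in> rdom (rel_plus A1 A2) \<longleftrightarrow> x \<in> rdom A1 \<and> x \<in> rdom A2"
    unfolding rdom_def rel_plus_def by blast
  show "qB A1 x + qB A2 x = qB (rel_plus A1 A2) x"
  proof (cases "x \<in> rdom A1 \<and> x \<in> rdom A2")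
    case True
    let ?a = "SOME y. y \<in> A1 x" and ?b = "SOME y. y \<in> A2 x"
      and ?c = "SOME y. y \<in> rel_plus A1 A2 x"
    have a: "?a \<in> A1 x" using some_in[of x A1] True by (simp only: simp_thms)
    have b: "?b \<in> A2 x" using some_in[of x A2] True by (simp only: simp_thms)
    have "?c \<in> rel_plus A1 A2 x" using some_in[of x "rel_plus A1 A2"] True dp by (simp only: simp_thms)
    then obtain a' b' where c: "?c = a' + b'" "a' \<in> A1 x" "b' \<in> A2 x"
      unfolding rel_plus_def by blast
    have "inner x ?a = inner x a'" using wd[OF assms(1,2) a c(2)] .
    moreover have "inner x ?b = inner x b'" using wd[OF assms(3,4) b c(3)] .
    ultimately have "inner x ?c = inner x ?a + inner x ?b" by (simp add: c(1) inner_add_right)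
    moreover have "qB A1 x = ereal (inner x ?a / 2)" using True unfolding qB_def by (simp only: if_True simp_thms)
    moreover have "qB A2 x = ereal (inner x ?b / 2)" using True unfolding qB_def by (simp only: if_True simp_thms)
    moreover have "qB (rel_plus A1 A2) x = ereal (inner x ?c / 2)" using True dp unfolding qB_def by (simp only: if_True simp_thms)
    ultimately show ?thesis by (simp only: plus_ereal.simps add_divide_distrib)
  next
    case False
    then have r: "qB (rel_plus A1 A2) x = \<infinity>" using dp by (simp add: qB_def)
    from False have "qB A1 x = \<infinity> \<or> qB A2 x = \<infinity>" by (simp add: qB_def)
    then show ?thesis using r qB_not_minf[of A1 x] qB_not_minf[of A2 x] by auto
  qed
next
  fix x
  assume h: "rdom A1 \<subseteq> rdom A2 \<and> monotone_rel (rel_minus A1 A2)"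
  have dp: "x \<in> rdom (rel_minus A1 A2) \<longleftrightarrow> x \<in> rdom A1 \<and> x \<in> rdom A2"
    unfolding rdom_def rel_minus_def by blast
  show "ediff (qB A1 x) (qB A2 x) = qB (rel_minus A1 A2) x"
  proof (cases "x \<in> rdom A1")
    case True
    then have T2: "x \<in> rdom A2" using h by blast
    let ?a = "SOME y. y \<in> A1 x" and ?b = "SOME y. y \<in> A2 x"
      and ?c = "SOME y. y \<in> rel_minus A1 A2 x"
    have a: "?a \<in> A1 x" using some_in[of x A1] True by (simp only: simp_thms)
    have b: "?b \<in> A2 x" using some_in[of x A2] T2 by (simp only: simp_thms)
    have "?c \<in> rel_minus A1 A2 x" using some_in[of x "rel_minus A1 A2"] True T2 dp by (simp only: simp_thms)
    then obtain a' b' where c: "?c = a' - b'" "a' \<in> A1 x" "b' \<in> A2 x"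
      unfolding rel_minus_def by blast
    have "inner x ?a = inner x a'" using wd[OF assms(1,2) a c(2)] .
    moreover have "inner x ?b = inner x b'" using wd[OF assms(3,4) b c(3)] .
    ultimately have "inner x ?c = inner x ?a - inner x ?b" by (simp add: c(1) inner_diff_right)
    moreover have "qB A1 x = ereal (inner x ?a / 2)" using True unfolding qB_def by (simp only: if_True simp_thms)
    moreover have "qB A2 x = ereal (inner x ?b / 2)" using T2 unfolding qB_def by (simp only: if_True simp_thms)
    moreover have "qB (rel_minus A1 A2) x = ereal (inner x ?c / 2)" using True T2 dp unfolding qB_def by (simp only: if_True simp_thms)
    ultimately show ?thesis unfolding ediff_def by (simp add: diff_divide_distrib)
  next
    case False
    then have "qB A1 x = \<infinity>" by (simp add: qB_def)
    moreover have "qB (rel_minus A1 A2) x = \<infinity>" using False dp by (simp add: qB_def)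
    ultimately show ?thesis by (simp add: ediff_def)
  qed
qed

end
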